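(* Let $(X,d)$ be a complete metric space and let $T:X\to \mathcal{CB}(X)$ be a multi-valued mapping such that \[ \mathcal{H}(Tx,Ty)\leq d(x,y)-\theta(d(x,y)) \] for all $x,y\in X$ with $x\neq y$, where $\theta:(0,\infty)\to(0,\infty)$ is a lower semicontinuous map such that $t\mapsto\frac{\theta(t)}{t}$ is non-increasing on $(0,\infty)$. Then $T$ has a fixed point, i.e., there exists $v\in X$ with $v\in Tv$.
   Context: $\mathcal{CB}(X)$ denotes the family of all nonempty closed and bounded subsets of $X$, and $\mathcal{H}$ is the Hausdorff metric on $\mathcal{CB}(X)$ induced by $d$: $\mathcal{H}(A,B)=\max\{\sup_{x\in B}d(x,A),\ \sup_{x\in A}d(x,B)\}$. *)

theory Defs
  imports "HOL-Analysis.Analysis"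
begin

definition CB :: "'a::metric_space set set" where
  "CB = {A. A \<noteq> {} \<and> closed A \<and> bounded A}"

definition hausdorff_H :: "'a::metric_space set \<Rightarrow> 'a set \<Rightarrow> real" where
  "hausdorff_H A B = max (SUP x\<in>B. infdist x A) (SUP x\<in>A. infdist x B)"

definition lsc_on :: "real set \<Rightarrow> (real \<Rightarrow> real) \<Rightarrow> bool" where
  "lsc_on S f \<longleftrightarrow> (\<forall>t\<in>S. \<forall>e>0. \<exists>\<delta>>0. \<forall>s\<in>S. \<bar>s - t\<bar> < \<delta> \<longrightarrow> f t - e < f s)"

end

theory Submission
  imports Defs
begin

lemma infdist_lessE:
  assumes "A \<noteq> {}" "infdist x A < r"
  obtains a where "a \<in> A" "dist x a < r"
  using assms by (auto simp: infdist_def cINF_less_iff)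

lemma infdist_le_H:
  fixes A B :: "'a::metric_space set"
  assumes "A \<in> CB" "B \<in> CB" "x \<in> A"
  shows "infdist x B \<le> hausdorff_H A B"
proof -
  from assms obtain b where b: "b \<in> B" by (auto simp: CB_def)
  from assms have "bounded A" by (auto simp: CB_def)
  then obtain e where e: "\<And>y. y \<in> A \<Longrightarrow> dist b y \<le> e" by (auto simp: bounded_any_center[of A b])
  have "bdd_above ((\<lambda>x. infdist x B) ` A)"
  proof (rule bdd_aboveI2)
    fix y assume "y \<in> A"
    have "infdist y B \<le> dist y b" using b by (rule infdist_le)
    also have "\<dots> \<le> e" using e[OF \<open>y \<in> A\<close>] by (simp add: dist_commute)
    finally show "infdist y B \<le> e" .
  qed
  then have "infdist x B \<le> (SUP x\<in>A. infdist x B)" using assms(3) by (rule cSUP_upper2) simp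
  then show ?thesis unfolding hausdorff_H_def by simp
qed

lemma geom_cauchy:
  fixes x :: "nat \<Rightarrow> 'a::metric_space"
  assumes q: "0 \<le> q" "q < 1" and d: "\<And>n. dist (x n) (x (Suc n)) \<le> q ^ n * D"
  shows "Cauchy x"
proof -
  have D: "0 \<le> D" using d[of 0] zero_le_dist[of "x 0" "x (Suc 0)"] by (simp del: zero_le_dist)
  have k: "dist (x m) (x (m + k)) \<le> q ^ m * D * (1 - q ^ k) / (1 - q)" for m k
  proof (induct k)
    case 0 then show ?case by simp
  next
    case (Suc k)
    have "dist (x m) (x (m + Suc k)) \<le> dist (x m) (x (m + k)) + dist (x (m+k)) (x (Suc (m + k)))"
      by (simp add: dist_triangle)
    also have "\<dots> \<le> q ^ m * D * (1 - q ^ k) / (1 - q) + q ^ (m+k) * D"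
      using Suc d[of "m+k"] by simp
    also have "\<dots> = q ^ m * D * (1 - q ^ Suc k) / (1 - q)"
      using q by (simp add: field_simps power_add)
    finally show ?case .
  qed
  have k2: "dist (x m) (x (m + k)) \<le> q ^ m * (D / (1 - q))" for m k
  proof -
    have "q ^ m * D * (1 - q ^ k) / (1 - q) \<le> q ^ m * D * 1 / (1 - q)"
      using q D by (intro divide_right_mono mult_left_mono) auto
    then show ?thesis using k[of m k] by simp
  qed
  have lim: "(\<lambda>m. q ^ m * (D / (1 - q))) \<longlonglongrightarrow> 0"
    using q by (intro tendsto_mult_left_zero LIMSEQ_power_zero) auto
  show ?thesis
  proof (rule metric_CauchyI)
    fix e :: real assume "0 < e"
    from lim[THEN order_tendstoD(2), OF this] obtain M where M: "\<And>m. m \<ge> M \<Longrightarrow> q ^ m * (D / (1 - q)) < e"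
      by (auto simp: eventually_sequentially)
    show "\<exists>M. \<forall>m\<ge>M. \<forall>n\<ge>M. dist (x m) (x n) < e"
    proof (intro exI allI impI)
      fix m n assume "m \<ge> M" "n \<ge> M"
      show "dist (x m) (x n) < e"
      proof (cases "m \<le> n")
        case True
        then have "dist (x m) (x n) \<le> q ^ m * (D / (1 - q))" using k2[of m "n - m"] by simp
        then show ?thesis using M[OF \<open>m \<ge> M\<close>] by simp
      next
        case False
        then have "dist (x n) (x m) \<le> q ^ n * (D / (1 - q))" using k2[of n "m - n"] by simp
        then show ?thesis using M[OF \<open>n \<ge> M\<close>] by (simp add: dist_commute)
      qed
    qed
  qed
qed

theorem mainTheorem4:
  fixes T :: "'a::complete_space \<Rightarrow> 'a set"
    and \<theta> :: "real \<Rightarrow> real"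
  assumes T_CB: "\<And>x. T x \<in> CB"
    and contr: "\<And>x y. x \<noteq> y \<Longrightarrow> hausdorff_H (T x) (T y) \<le> dist x y - \<theta> (dist x y)"
    and theta_pos: "\<And>t. t > 0 \<Longrightarrow> \<theta> t > 0"
    and theta_lsc: "lsc_on {0<..} \<theta>"
    and theta_ratio: "\<And>s t. 0 < s \<Longrightarrow> s \<le> t \<Longrightarrow> \<theta> t / t \<le> \<theta> s / s"
  shows "\<exists>v. v \<in> T v"
proof (rule ccontr)
  assume nofix: "\<nexists>v. v \<in> T v"
  have ne: "T x \<noteq> {}" and cl: "closed (T x)" for x using T_CB[of x] by (auto simp: CB_def)
  obtain x0 :: 'a where True by simp
  obtain x1 where x1: "x1 \<in> T x0" using ne[of x0] by blast
  have x01: "x0 \<noteq> x1" using x1 nofix by blast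
  define d1 where "d1 = dist x0 x1"
  have d1: "d1 > 0" using x01 by (simp add: d1_def)
  define c where "c = \<theta> d1 / d1"
  have c: "c > 0" using theta_pos[OF d1] d1 by (simp add: c_def)
  have Hnn: "0 \<le> hausdorff_H (T x) (T y)" for x y
  proof -
    obtain a where "a \<in> T x" using ne by blast
    then have "infdist a (T y) \<le> hausdorff_H (T x) (T y)" using T_CB by (intro infdist_le_H)
    then show ?thesis using infdist_nonneg[of a "T y"] by linarith
  qed
  have "0 \<le> d1 - \<theta> d1" using contr[OF x01] Hnn[of x0 x1] by (simp add: d1_def)
  then have c1: "c \<le> 1" using d1 by (simp add: c_def field_simps)
  define q where "q = 1 - c / 2"
  have q: "0 \<le> q" "q < 1" using c c1 by (auto simp: q_def)
  have step: "\<exists>z. z \<in> T y \<and> dist y z \<le> q * dist x y"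
    if "y \<in> T x" "dist x y \<le> d1" for x y
  proof -
    have xy: "x \<noteq> y" using that nofix by blast
    let ?d = "dist x y"
    have dpos: "?d > 0" using xy by simp
    have "c \<le> \<theta> ?d / ?d" unfolding c_def using theta_ratio[OF dpos that(2)] .
    then have th: "c * ?d \<le> \<theta> ?d" using dpos by (simp add: field_simps)
    have "infdist y (T y) \<le> hausdorff_H (T x) (T y)"
      using infdist_le_H[OF T_CB T_CB that(1)] .
    also have "\<dots> \<le> ?d - \<theta> ?d" using contr[OF xy] .
    also have "\<dots> < q * ?d" using th mult_pos_pos[OF c dpos] by (simp add: q_def algebra_simps)
    finally obtain z where "z \<in> T y" "dist y z < q * ?d" using infdist_lessE ne by metis
    then show ?thesis by (intro exI[of _ z]) auto
  qed
  define nx where "nx = (\<lambda>(x::'a, y::'a). (y, SOME z. z \<in> T y \<and> dist y z \<le> q * dist x y))"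
  define p where "p n = (nx ^^ n) (x0, x1)" for n
  have inv: "snd (p n) \<in> T (fst (p n)) \<and> dist (fst (p n)) (snd (p n)) \<le> q ^ n * d1" for n
  proof (induct n)
    case 0 then show ?case using x1 by (simp add: p_def d1_def)
  next
    case (Suc n)
    obtain x y where pn: "p n = (x, y)" by fastforce
    have "q ^ n * d1 \<le> 1 * d1" using q d1 by (intro mult_right_mono power_le_one) auto
    then have "dist x y \<le> d1" using Suc pn by simp
    from someI_ex[OF step[OF _ this]] Suc pn
    have "(SOME z. z \<in> T y \<and> dist y z \<le> q * dist x y) \<in> T y \<and>
          dist y (SOME z. z \<in> T y \<and> dist y z \<le> q * dist x y) \<le> q * dist x y" by simp
    moreover have "q * dist x y \<le> q * (q ^ n * d1)" using Suc pn q by (intro mult_left_mono) auto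
    moreover have "p (Suc n) = (y, SOME z. z \<in> T y \<and> dist y z \<le> q * dist x y)"
      using pn by (simp add: p_def nx_def)
    ultimately show ?case by auto
  qed
  define x where "x n = fst (p n)" for n
  have xs: "x (Suc n) = snd (p n)" for n
    by (cases "p n") (simp add: x_def p_def nx_def)
  have xin: "x (Suc n) \<in> T (x n)" for n using inv[of n] xs by (simp add: x_def)
  have "Cauchy x"
    by (rule geom_cauchy[OF q, of _ d1]) (use inv xs in \<open>simp add: x_def\<close>)
  then obtain v where v: "x \<longlonglongrightarrow> v" using complete_UNIV by (auto simp: complete_def)
  have bound: "infdist v (T v) \<le> dist v (x (Suc n)) + dist (x n) v" for n
  proof -
    have "infdist v (T v) \<le> infdist (x (Suc n)) (T v) + dist v (x (Suc n))"
      by (rule infdist_triangle)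
    moreover have "infdist (x (Suc n)) (T v) \<le> dist (x n) v"
    proof (cases "x n = v")
      case True then show ?thesis using xin[of n] by simp
    next
      case False
      have "infdist (x (Suc n)) (T v) \<le> hausdorff_H (T (x n)) (T v)"
        using infdist_le_H[OF T_CB T_CB xin] .
      also have "\<dots> \<le> dist (x n) v - \<theta> (dist (x n) v)" using contr[OF False] .
      also have "\<dots> \<le> dist (x n) v" using theta_pos[of "dist (x n) v"] False by simp
      finally show ?thesis .
    qed
    ultimately show ?thesis by linarith
  qed
  have lim0: "(\<lambda>n. dist v (x (Suc n)) + dist (x n) v) \<longlonglongrightarrow> 0"
  proof -
    have "(\<lambda>n. dist (x (Suc n)) v) \<longlonglongrightarrow> 0" using v LIMSEQ_Suc tendsto_dist_iff by blast
    moreover have "(\<lambda>n. dist (x n) v) \<longlonglongrightarrow> 0" using v tendsto_dist_iff by blast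
    ultimately show ?thesis using tendsto_add[of _ 0 _ _ 0] by (simp add: dist_commute)
  qed
  have "infdist v (T v) \<le> 0"
    by (rule LIMSEQ_le_const[OF lim0]) (use bound in auto)
  then have "infdist v (T v) = 0" using infdist_nonneg[of v] by (simp add: order_antisym)
  then have "v \<in> T v" using in_closed_iff_infdist_zero[OF cl ne] by blast
  with nofix show False by blast
qed

end
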